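(* Let $k\ge1$ and $\ell\ge1$. Then $$|\{n\in A_{2k}:\max\mathcal{CG}(n)=\max\mathcal{CG}_1(n)=F_{2k+2\ell}\}|=F_{2\ell+1},$$ $$|\{n\in A_{2k}:\max\mathcal{CG}(n)=\max\mathcal{CG}_2(n)=F_{2k+2\ell}\}|=F_{2\ell}.$$
   Context: Fibonacci numbers: $F_1=F_2=1$, $F_{n+1}=F_n+F_{n-1}$ for $n\ge2$. Chung–Graham decomposition: every positive integer $n$ has a unique representation $n=\sum_{i\ge1}c_iF_{2i}$ with $c_i\in\{0,1,2\}$, only finitely many nonzero, such that whenever $c_i=c_j=2$ with $i<j$ there is $k$ with $i<k<j$ and $c_k=0$. Let $\mathcal{CG}(n)$ be the set of $F_{2i}$ with $c_i\neq0$, $\mathcal{CG}_1(n)$ the set of $F_{2i}$ with $c_i=1$, and $\mathcal{CG}_2(n)$ the set of $F_{2i}$ with $c_i=2$. For $k\ge1$, $A_{2k}=\{n\ge1:\min\mathcal{CG}(n)=F_{2k}\}$. *)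

theory Defs
  imports "HOL-Number_Theory.Fib"
begin

text \<open>Coefficient sequences c :: nat => nat, index i >= 1 standing for F_{2i};
  c 0 = 0 is forced (index 0 unused).\<close>
definition cg_valid :: "(nat \<Rightarrow> nat) \<Rightarrow> bool" where
  "cg_valid c \<longleftrightarrow> c 0 = 0 \<and> (\<forall>i. c i \<le> 2) \<and> finite {i. c i \<noteq> 0} \<and>
     (\<forall>i j. i < j \<and> c i = 2 \<and> c j = 2 \<longrightarrow> (\<exists>k. i < k \<and> k < j \<and> c k = 0))"

definition cg_val :: "(nat \<Rightarrow> nat) \<Rightarrow> nat" where
  "cg_val c = (\<Sum>i\<in>{i. c i \<noteq> 0}. c i * fib (2 * i))"

definition cg_coeffs :: "nat \<Rightarrow> nat \<Rightarrow> nat" where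
  "cg_coeffs n = (THE c. cg_valid c \<and> cg_val c = n)"

definition CG :: "nat \<Rightarrow> nat set" where
  "CG n = {fib (2 * i) | i. i \<ge> 1 \<and> cg_coeffs n i \<noteq> 0}"

definition CG1 :: "nat \<Rightarrow> nat set" where
  "CG1 n = {fib (2 * i) | i. i \<ge> 1 \<and> cg_coeffs n i = 1}"

definition CG2 :: "nat \<Rightarrow> nat set" where
  "CG2 n = {fib (2 * i) | i. i \<ge> 1 \<and> cg_coeffs n i = 2}"

text \<open>A k stands for the paper's A_{2k}.\<close>
definition A :: "nat \<Rightarrow> nat set" where
  "A k = {n. n \<ge> 1 \<and> Min (CG n) = fib (2 * k)}"

end

theory Submission
  imports Defs
begin

definition gs :: "nat \<Rightarrow> nat \<Rightarrow> (nat \<Rightarrow> nat) set" where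
  "gs a m = {c. cg_valid c \<and> (\<forall>i. c i \<noteq> 0 \<longrightarrow> a \<le> i \<and> i \<le> m)}"

definition rs :: "nat \<Rightarrow> nat \<Rightarrow> (nat \<Rightarrow> nat) set" where
  "rs a m = {c \<in> gs a m. \<forall>i. c i = 2 \<longrightarrow> (\<exists>k. i < k \<and> k \<le> m \<and> c k = 0)}"

lemma valid_0: "cg_valid c \<Longrightarrow> c 0 = 0" unfolding cg_valid_def by blast
lemma valid_le2: "cg_valid c \<Longrightarrow> c i \<le> 2" unfolding cg_valid_def by blast
lemma valid_fin: "cg_valid c \<Longrightarrow> finite {i. c i \<noteq> 0}" unfolding cg_valid_def by blast
lemma valid_two: "cg_valid c \<Longrightarrow> i < j \<Longrightarrow> c i = 2 \<Longrightarrow> c j = 2 \<Longrightarrow> \<exists>k. i < k \<and> k < j \<and> c k = 0"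
  unfolding cg_valid_def by blast
lemma validI: "c 0 = 0 \<Longrightarrow> (\<And>i. c i \<le> 2) \<Longrightarrow> finite {i. c i \<noteq> 0} \<Longrightarrow>
   (\<And>i j. i < j \<Longrightarrow> c i = 2 \<Longrightarrow> c j = 2 \<Longrightarrow> \<exists>k. i < k \<and> k < j \<and> c k = 0) \<Longrightarrow> cg_valid c"
  unfolding cg_valid_def by blast

lemma rs_sub: "rs a m \<subseteq> gs a m" unfolding rs_def by auto

lemma gs_mono: "c \<in> gs a m \<Longrightarrow> c \<in> gs a (Suc m)"
  unfolding gs_def using le_SucI by blast

lemma del_gs: assumes "c \<in> gs a (Suc m)" shows "c(Suc m := 0) \<in> gs a m"
proof -
  have v: "cg_valid c" and s: "\<forall>i. c i \<noteq> 0 \<longrightarrow> a \<le> i \<and> i \<le> Suc m" using assms by (auto simp: gs_def)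
  have "cg_valid (c(Suc m := 0))"
  proof (rule validI)
    show "(c(Suc m := 0)) 0 = 0" using valid_0[OF v] by simp
    fix i show "(c(Suc m := 0)) i \<le> 2" using valid_le2[OF v] by simp
  next
    show "finite {i. (c(Suc m := 0)) i \<noteq> 0}"
      by (rule finite_subset[of _ "{i. c i \<noteq> 0}"]) (use valid_fin[OF v] in auto)
  next
    fix i j assume h: "i < j" "(c(Suc m := 0)) i = 2" "(c(Suc m := 0)) j = 2"
    then have "i < j" "c i = 2" "c j = 2" by (auto split: if_splits)
    then obtain k where "i < k" "k < j" "c k = 0" using valid_two[OF v] by blast
    then show "\<exists>k. i < k \<and> k < j \<and> (c(Suc m := 0)) k = 0" by (intro exI[of _ k]) simp
  qed
  moreover have "\<forall>i. (c(Suc m := 0)) i \<noteq> 0 \<longrightarrow> a \<le> i \<and> i \<le> m"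
    using s by (auto simp: le_Suc_eq)
  ultimately show ?thesis by (simp add: gs_def)
qed

lemma gs_zero: "c \<in> gs a (Suc m) \<Longrightarrow> c (Suc m) = 0 \<Longrightarrow> c \<in> gs a m"
  using del_gs[of c a m] by (simp add: fun_upd_idem)

lemma gs_le2: "c \<in> gs a m \<Longrightarrow> c i \<le> 2"
  unfolding gs_def using valid_le2 by blast

lemma gs_supp: "c \<in> gs a m \<Longrightarrow> c i \<noteq> 0 \<Longrightarrow> a \<le> i \<and> i \<le> m"
  unfolding gs_def by auto

lemma del_rs2: assumes "c \<in> gs a (Suc m)" "c (Suc m) = 2" shows "c(Suc m := 0) \<in> rs a m"
proof -
  have v: "cg_valid c" using assms by (auto simp: gs_def)
  have "\<exists>k. i < k \<and> k \<le> m \<and> (c(Suc m := 0)) k = 0" if h: "(c(Suc m := 0)) i = 2" for i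
  proof -
    have "i \<noteq> Suc m" "c i = 2" using h by (auto split: if_splits)
    moreover have "i \<le> Suc m" using gs_supp[OF assms(1), of i] \<open>c i = 2\<close> by auto
    ultimately have "i < Suc m" by auto
    then obtain k where "i < k" "k < Suc m" "c k = 0" using valid_two[OF v _ \<open>c i = 2\<close> assms(2)] by blast
    then show ?thesis by (intro exI[of _ k]) simp
  qed
  then show ?thesis using del_gs[OF assms(1)] by (auto simp: rs_def)
qed

lemma rs_not2: "c \<in> rs a (Suc m) \<Longrightarrow> c (Suc m) \<noteq> 2"
  unfolding rs_def by force

lemma del_rs1: assumes "c \<in> rs a (Suc m)" "c (Suc m) = 1" shows "c(Suc m := 0) \<in> rs a m"
proof -
  have g: "c \<in> gs a (Suc m)" using assms rs_sub by blast
  have "\<exists>k. i < k \<and> k \<le> m \<and> (c(Suc m := 0)) k = 0" if h: "(c(Suc m := 0)) i = 2" for i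
  proof -
    have "c i = 2" using h by (auto split: if_splits)
    then obtain k where "i < k" "k \<le> Suc m" "c k = 0" using assms(1) unfolding rs_def by blast
    moreover have "k \<noteq> Suc m" using assms(2) \<open>c k = 0\<close> by auto
    ultimately show ?thesis by (intro exI[of _ k]) simp
  qed
  then show ?thesis using del_gs[OF g] by (auto simp: rs_def)
qed

lemma upd_gs:
  assumes "c \<in> gs a m" "a \<le> Suc m" "d \<le> 2"
    and two: "d = 2 \<Longrightarrow> c \<in> rs a m"
  shows "c(Suc m := d) \<in> gs a (Suc m)"
proof -
  have v: "cg_valid c" and s: "\<forall>i. c i \<noteq> 0 \<longrightarrow> a \<le> i \<and> i \<le> m" using assms by (auto simp: gs_def)
  have cS: "c (Suc m) = 0" using s by force
  have "cg_valid (c(Suc m := d))"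
  proof (rule validI)
    show "(c(Suc m := d)) 0 = 0" using valid_0[OF v] by simp
    fix i show "(c(Suc m := d)) i \<le> 2" using valid_le2[OF v] assms(3) by simp
  next
    show "finite {i. (c(Suc m := d)) i \<noteq> 0}"
      by (rule finite_subset[of _ "insert (Suc m) {i. c i \<noteq> 0}"]) (use valid_fin[OF v] in auto)
  next
    fix i j assume h: "i < j" "(c(Suc m := d)) i = 2" "(c(Suc m := d)) j = 2"
    show "\<exists>k. i < k \<and> k < j \<and> (c(Suc m := d)) k = 0"
    proof (cases "j = Suc m")
      case True
      then have "i \<noteq> Suc m" "c i = 2" "d = 2" using h by (auto split: if_splits)
      then obtain k where "i < k" "k \<le> m" "c k = 0" using two unfolding rs_def by blast
      then show ?thesis using True by (intro exI[of _ k]) simp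
    next
      case False
      then have "c j = 2" using h by auto
      then have "j \<le> m" using s by force
      then have "i \<noteq> Suc m" using h by auto
      then have "c i = 2" using h by auto
      then obtain k where "i < k" "k < j" "c k = 0" using valid_two[OF v _ \<open>c i = 2\<close> \<open>c j = 2\<close>] h by blast
      then show ?thesis using \<open>j \<le> m\<close> by (intro exI[of _ k]) simp
    qed
  qed
  moreover have "\<forall>i. (c(Suc m := d)) i \<noteq> 0 \<longrightarrow> a \<le> i \<and> i \<le> Suc m"
  proof (intro allI impI)
    fix i assume "(c(Suc m := d)) i \<noteq> 0"
    then show "a \<le> i \<and> i \<le> Suc m"
    proof (cases "i = Suc m")
      case False
      then have "c i \<noteq> 0" using \<open>(c(Suc m := d)) i \<noteq> 0\<close> by simp
      then show ?thesis using spec[OF s, of i] by simp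
    qed (use assms(2) in simp)
  qed
  ultimately show ?thesis by (simp add: gs_def)
qed

lemma upd_rs1:
  assumes "c \<in> rs a m" "a \<le> Suc m"
  shows "c(Suc m := 1) \<in> rs a (Suc m)"
proof -
  have g: "c(Suc m := 1) \<in> gs a (Suc m)" using upd_gs[of c a m 1] assms rs_sub by auto
  have "\<exists>k. i < k \<and> k \<le> Suc m \<and> (c(Suc m := 1)) k = 0" if h: "(c(Suc m := 1)) i = 2" for i
  proof -
    have "c i = 2" using h by (auto split: if_splits)
    then obtain k where "i < k" "k \<le> m" "c k = 0" using assms(1) unfolding rs_def by blast
    then show ?thesis by (intro exI[of _ k]) simp
  qed
  then show ?thesis using g by (auto simp: rs_def)
qed

lemma gs_rs: assumes "c \<in> gs a m" shows "c \<in> rs a (Suc m)"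
proof -
  have "c (Suc m) = 0" using gs_supp[OF assms, of "Suc m"] by auto
  have "\<exists>k. i < k \<and> k \<le> Suc m \<and> c k = 0" if "c i = 2" for i
    using gs_supp[OF assms, of i] that \<open>c (Suc m) = 0\<close> by (intro exI[of _ "Suc m"]) auto
  then show ?thesis using gs_mono[OF assms] unfolding rs_def by blast
qed

lemma gs_Suc: assumes "a \<le> Suc m"
  shows "gs a (Suc m) = gs a m \<union> (\<lambda>c. c(Suc m := 1)) ` gs a m \<union> (\<lambda>c. c(Suc m := 2)) ` rs a m"
proof (intro equalityI subsetI)
  fix c assume c: "c \<in> gs a (Suc m)"
  have "c (Suc m) \<le> 2" using gs_le2[OF c] .
  then consider "c (Suc m) = 0" | "c (Suc m) = 1" | "c (Suc m) = 2" by linarith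
  then show "c \<in> gs a m \<union> (\<lambda>c. c(Suc m := 1)) ` gs a m \<union> (\<lambda>c. c(Suc m := 2)) ` rs a m"
  proof cases
    case 1 then show ?thesis using gs_zero[OF c] by auto
  next
    case 2
    have "c = (c(Suc m := 0))(Suc m := 1)" using 2 by auto
    then show ?thesis using del_gs[OF c] by blast
  next
    case 3
    have "c = (c(Suc m := 0))(Suc m := 2)" using 3 by auto
    then show ?thesis using del_rs2[OF c 3] by blast
  qed
next
  fix c assume "c \<in> gs a m \<union> (\<lambda>c. c(Suc m := 1)) ` gs a m \<union> (\<lambda>c. c(Suc m := 2)) ` rs a m"
  then consider "c \<in> gs a m" | c' where "c' \<in> gs a m" "c = c'(Suc m := 1)"
      | c' where "c' \<in> rs a m" "c = c'(Suc m := 2)" by blast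
  then show "c \<in> gs a (Suc m)"
  proof cases
    case 1 then show ?thesis by (rule gs_mono)
  next
    case 2 then show ?thesis using upd_gs[OF _ assms, of c' 1] by simp
  next
    case 3 then show ?thesis using upd_gs[OF _ assms, of c' 2] rs_sub by auto
  qed
qed

lemma rs_Suc: assumes "a \<le> Suc m"
  shows "rs a (Suc m) = gs a m \<union> (\<lambda>c. c(Suc m := 1)) ` rs a m"
proof (intro equalityI subsetI)
  fix c assume c: "c \<in> rs a (Suc m)"
  have cg: "c \<in> gs a (Suc m)" using c rs_sub by blast
  have "c (Suc m) \<le> 2" using gs_le2[OF cg] .
  then consider "c (Suc m) = 0" | "c (Suc m) = 1" using rs_not2[OF c] by linarith
  then show "c \<in> gs a m \<union> (\<lambda>c. c(Suc m := 1)) ` rs a m"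
  proof cases
    case 1 then show ?thesis using gs_zero[OF cg] by auto
  next
    case 2
    have "c = (c(Suc m := 0))(Suc m := 1)" using 2 by auto
    then show ?thesis using del_rs1[OF c 2] by blast
  qed
next
  fix c assume "c \<in> gs a m \<union> (\<lambda>c. c(Suc m := 1)) ` rs a m"
  then show "c \<in> rs a (Suc m)" using gs_rs upd_rs1[OF _ assms] by auto
qed

lemma fibA: "fib (2 * Suc j + 2) = 2 * fib (2*j+2) + fib (2*j+1)"
proof -
  have "fib (2 * Suc j + 2) = fib ((2*j+2)+2)" by (rule arg_cong[where f=fib]) simp
  also have "\<dots> = fib ((2*j+2)+1) + fib (2*j+2)" by (rule fib_plus_2)
  also have "fib ((2*j+2)+1) = fib ((2*j+1)+2)" by (rule arg_cong[where f=fib]) simp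
  also have "\<dots> = fib ((2*j+1)+1) + fib (2*j+1)" by (rule fib_plus_2)
  also have "(2*j+1)+1 = 2*j+2" by simp
  finally show ?thesis by simp
qed

lemma fibB: "fib (2 * Suc j + 1) = fib (2*j+2) + fib (2*j+1)"
proof -
  have "fib (2 * Suc j + 1) = fib ((2*j+1)+2)" by (rule arg_cong[where f=fib]) simp
  also have "\<dots> = fib ((2*j+1)+1) + fib (2*j+1)" by (rule fib_plus_2)
  also have "(2*j+1)+1 = 2*j+2" by simp
  finally show ?thesis .
qed

lemma gs_top: "c \<in> gs a m \<Longrightarrow> m < i \<Longrightarrow> c i = 0"
  by (metis gs_supp not_le)

lemma fibC: "fib (2 * Suc j) = fib (2*j+2)" by simp

lemma zero_valid: "cg_valid (\<lambda>_. 0)" unfolding cg_valid_def by auto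

lemma gs_base: "gs (Suc b) b = {\<lambda>_. 0}"
proof -
  have "c = (\<lambda>_. 0)" if "c \<in> gs (Suc b) b" for c
  proof
    fix i show "c i = 0" using gs_supp[OF that, of i] by linarith
  qed
  then show ?thesis using zero_valid by (auto simp: gs_def)
qed

lemma rs_base: "rs (Suc b) b = {\<lambda>_. 0}"
  using gs_base[of b] unfolding rs_def by auto

lemma inj_upd: "inj_on (\<lambda>c. c(Suc m := d)) (gs a m)"
proof (rule inj_onI)
  fix c c' assume c: "c \<in> gs a m" and c': "c' \<in> gs a m" and e: "c(Suc m := d) = c'(Suc m := d)"
  show "c = c'"
  proof
    fix x show "c x = c' x"
    proof (cases "x = Suc m")
      case True then show ?thesis using gs_top[OF c, of x] gs_top[OF c', of x] by simp
    next
      case False then show ?thesis using fun_cong[OF e, of x] by auto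
    qed
  qed
qed

lemma count:
  "finite (gs (Suc b) (b+j)) \<and> card (gs (Suc b) (b+j)) = fib (2*j+2) \<and>
   finite (rs (Suc b) (b+j)) \<and> card (rs (Suc b) (b+j)) = fib (2*j+1)"
proof (induction j)
  case 0 then show ?case by (simp add: gs_base rs_base)
next
  case (Suc j)
  define m where "m = b + j"
  have le: "Suc b \<le> Suc m" by (simp add: m_def)
  have fG: "finite (gs (Suc b) m)" and cG: "card (gs (Suc b) m) = fib (2*j+2)"
   and fR: "finite (rs (Suc b) m)" and cR: "card (rs (Suc b) m) = fib (2*j+1)"
    using Suc.IH by (auto simp: m_def)
  let ?G = "gs (Suc b) m" and ?R = "rs (Suc b) m"
  let ?U1 = "(\<lambda>c. c(Suc m := 1)) ` ?G" and ?U2 = "(\<lambda>c. c(Suc m := 2)) ` ?R"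
  have z: "c (Suc m) = 0" if "c \<in> ?G" for c using gs_top[OF that, of "Suc m"] by simp
  have zr: "c (Suc m) = 0" if "c \<in> ?R" for c using z rs_sub that by blast
  have d1: "?G \<inter> ?U1 = {}" by (auto dest: z)
  have u2: "c (Suc m) = 2" if "c \<in> ?U2" for c using that by auto
  have u1: "c (Suc m) \<noteq> 2" if "c \<in> ?G \<union> ?U1" for c using that by (auto dest: z)
  have d2: "(?G \<union> ?U1) \<inter> ?U2 = {}" using u1 u2 by fastforce
  have cU1: "card ?U1 = fib (2*j+2)" using card_image[OF inj_upd] cG by simp
  have cU2: "card ?U2 = fib (2*j+1)" using card_image[OF inj_on_subset[OF inj_upd rs_sub]] cR by simp
  have "card (gs (Suc b) (Suc m)) = card (?G \<union> ?U1 \<union> ?U2)" using gs_Suc[OF le] by simp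
  also have "\<dots> = card ?G + card ?U1 + card ?U2"
    using fG fR d1 d2 by (simp add: card_Un_disjoint)
  finally have g: "card (gs (Suc b) (Suc m)) = fib (2 * Suc j + 2)" using cG cU1 cU2 fibA by simp
  have d3: "?G \<inter> (\<lambda>c. c(Suc m := 1)) ` ?R = {}" by (auto dest: z zr)
  have cU3: "card ((\<lambda>c. c(Suc m := 1)) ` ?R) = fib (2*j+1)" using card_image[OF inj_on_subset[OF inj_upd rs_sub]] cR by simp
  have "card (rs (Suc b) (Suc m)) = card (?G \<union> (\<lambda>c. c(Suc m := 1)) ` ?R)" using rs_Suc[OF le] by simp
  also have "\<dots> = card ?G + card ((\<lambda>c. c(Suc m := 1)) ` ?R)"
    using fG fR d3 by (simp add: card_Un_disjoint)
  finally have r: "card (rs (Suc b) (Suc m)) = fib (2 * Suc j + 1)" using cG cU3 fibB by simp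
  have "finite (gs (Suc b) (Suc m))" using gs_Suc[OF le] fG fR by simp
  moreover have "finite (rs (Suc b) (Suc m))" using rs_Suc[OF le] fG fR by simp
  ultimately show ?case using g r by (simp add: m_def)
qed

lemma val_sum: "(\<And>i. c i \<noteq> 0 \<Longrightarrow> i \<le> m) \<Longrightarrow> cg_val c = (\<Sum>i\<le>m. c i * fib (2*i))"
  unfolding cg_val_def by (rule sum.mono_neutral_left) auto

lemma val_upd: assumes "c \<in> gs a m" shows "cg_val (c(Suc m := d)) = cg_val c + d * fib (2 * Suc m)"
proof -
  have "cg_val (c(Suc m := d)) = (\<Sum>i\<le>Suc m. (c(Suc m := d)) i * fib (2*i))"
  proof (rule val_sum)
    fix i assume h: "(c(Suc m := d)) i \<noteq> 0"
    show "i \<le> Suc m"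
    proof (cases "i = Suc m")
      case False
      then have "c i \<noteq> 0" using h by simp
      then show ?thesis using gs_supp[OF assms, of i] by simp
    qed simp
  qed
  also have "\<dots> = (\<Sum>i\<le>m. c i * fib (2*i)) + d * fib (2 * Suc m)"
    by (simp add: sum.atMost_Suc)
  also have "(\<Sum>i\<le>m. c i * fib (2*i)) = cg_val c"
    by (rule val_sum[symmetric]) (use gs_supp[OF assms] in blast)
  finally show ?thesis .
qed

lemma val_decomp: assumes "c \<in> gs a (Suc m)"
  shows "cg_val c = cg_val (c(Suc m := 0)) + c (Suc m) * fib (2 * Suc m)"
  using val_upd[OF del_gs[OF assms], of "c (Suc m)"] by simp

lemma val_zero: "cg_val (\<lambda>_. 0) = 0" by (simp add: cg_val_def)

lemma bounds: "(\<forall>c\<in>gs 1 m. cg_val c < fib (2*m+2)) \<and> (\<forall>c\<in>rs 1 m. cg_val c < fib (2*m+1))"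
proof (induction m)
  case 0
  have "gs 1 0 = {\<lambda>_. 0}" "rs 1 0 = {\<lambda>_. 0}" using gs_base[of 0] rs_base[of 0] by simp_all
  then show ?case by (simp add: val_zero)
next
  case (Suc m)
  let ?F = "fib (2*m+2)"
  have IG: "cg_val c < ?F" if "c \<in> gs 1 m" for c using Suc.IH that by blast
  have IR: "cg_val c < fib (2*m+1)" if "c \<in> rs 1 m" for c using Suc.IH that by blast
  have F: "fib (2 * Suc m) = ?F" by simp
  have g: "cg_val c < fib (2 * Suc m + 2)" if c: "c \<in> gs 1 (Suc m)" for c
  proof -
    have dec: "cg_val c = cg_val (c(Suc m := 0)) + c (Suc m) * ?F" using val_decomp[OF c] F by simp
    have b1: "cg_val (c(Suc m := 0)) < ?F" using IG[OF del_gs[OF c]] .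
    have "c (Suc m) \<le> 2" using gs_le2[OF c] .
    then consider "c (Suc m) \<le> 1" | "c (Suc m) = 2" by linarith
    then show ?thesis
    proof cases
      case 1
      then have "c (Suc m) * ?F \<le> ?F" by simp
      then show ?thesis using dec b1 fibA[of m] by linarith
    next
      case 2
      have "cg_val (c(Suc m := 0)) < fib (2*m+1)" using IR[OF del_rs2[OF c 2]] .
      moreover have "cg_val c = cg_val (c(Suc m := 0)) + 2 * ?F" using dec 2 by simp
      ultimately show ?thesis using fibA[of m] by linarith
    qed
  qed
  have r: "cg_val c < fib (2 * Suc m + 1)" if c: "c \<in> rs 1 (Suc m)" for c
  proof -
    have cg: "c \<in> gs 1 (Suc m)" using c rs_sub by blast
    have dec: "cg_val c = cg_val (c(Suc m := 0)) + c (Suc m) * ?F" using val_decomp[OF cg] F by simp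
    have "c (Suc m) \<le> 2" using gs_le2[OF cg] .
    then consider "c (Suc m) = 0" | "c (Suc m) = 1" using rs_not2[OF c] by linarith
    then show ?thesis
    proof cases
      case 1
      have "cg_val (c(Suc m := 0)) < ?F" using IG[OF del_gs[OF cg]] .
      then show ?thesis using dec 1 fibB[of m] by simp
    next
      case 2
      have "cg_val (c(Suc m := 0)) < fib (2*m+1)" using IR[OF del_rs1[OF c 2]] .
      then show ?thesis using dec 2 fibB[of m] by simp
    qed
  qed
  show ?case using g r by blast
qed

lemma divmod_uniq:
  fixes x y x' y' F :: nat
  assumes "x < F" "x' < F" "x + y * F = x' + y' * F"
  shows "y = y' \<and> x = x'"
proof -
  have F: "F > 0" using assms by simp
  have "(x + y * F) div F = y" using assms(1) F by simp
  moreover have "(x' + y' * F) div F = y'" using assms(2) F by simp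
  moreover have "(x + y * F) mod F = x" using assms(1) F by simp
  moreover have "(x' + y' * F) mod F = x'" using assms(2) F by simp
  ultimately show ?thesis using assms(3) by metis
qed

lemma inj_val: "inj_on cg_val (gs 1 m)"
proof (induction m)
  case 0
  have "gs 1 0 = {\<lambda>_. 0}" using gs_base[of 0] by simp
  then show ?case by simp
next
  case (Suc m)
  show ?case
  proof (rule inj_onI)
    fix c d assume c: "c \<in> gs 1 (Suc m)" and d: "d \<in> gs 1 (Suc m)" and e: "cg_val c = cg_val d"
    let ?F = "fib (2 * Suc m)"
    have dc: "cg_val c = cg_val (c(Suc m := 0)) + c (Suc m) * ?F" using val_decomp[OF c] .
    have dd: "cg_val d = cg_val (d(Suc m := 0)) + d (Suc m) * ?F" using val_decomp[OF d] .
    have bc: "cg_val (c(Suc m := 0)) < ?F" using bounds[of m] del_gs[OF c] by simp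
    have bd: "cg_val (d(Suc m := 0)) < ?F" using bounds[of m] del_gs[OF d] by simp
    have u: "c (Suc m) = d (Suc m) \<and> cg_val (c(Suc m := 0)) = cg_val (d(Suc m := 0))"
    proof -
      have "cg_val (c(Suc m := 0)) + c (Suc m) * ?F = cg_val (d(Suc m := 0)) + d (Suc m) * ?F"
        using dc dd e by linarith
      then show ?thesis using divmod_uniq[OF bc bd] by blast
    qed
    then have "c(Suc m := 0) = d(Suc m := 0)"
      using inj_onD[OF Suc.IH _ del_gs[OF c] del_gs[OF d]] by blast
    then have "(c(Suc m := 0))(Suc m := c (Suc m)) = (d(Suc m := 0))(Suc m := d (Suc m))" using u by simp
    then show "c = d" by simp
  qed
qed

lemma n_lt: "n < fib (2*n+2)"
proof (induction n)
  case 0 then show ?case by simp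
next
  case (Suc n)
  have "fib (2*n+1) > 0" by (rule fib_neq_0_nat) simp
  then show ?case using Suc fibA[of n] by linarith
qed

lemma surj_val: "n \<in> cg_val ` gs 1 n"
proof -
  have fin: "finite (gs 1 n)" and cd: "card (gs 1 n) = fib (2*n+2)" using count[of 0 n] by simp_all
  have sub: "cg_val ` gs 1 n \<subseteq> {..<fib (2*n+2)}" using bounds[of n] by auto
  have "card (cg_val ` gs 1 n) = card {..<fib (2*n+2)}" using card_image[OF inj_val] cd by simp
  then have "cg_val ` gs 1 n = {..<fib (2*n+2)}" using card_subset_eq[OF _ sub] by simp
  then show ?thesis using n_lt[of n] by simp
qed

lemma exists_rep: "\<exists>c. cg_valid c \<and> cg_val c = n"
  using surj_val[of n] unfolding gs_def by blast

lemma valid_in_gs: assumes v: "cg_valid c" shows "\<exists>m. c \<in> gs 1 m"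
proof -
  let ?M = "Max (insert 0 {i. c i \<noteq> 0})"
  have fin: "finite (insert 0 {i. c i \<noteq> 0})" using valid_fin[OF v] by simp
  have "1 \<le> i \<and> i \<le> ?M" if "c i \<noteq> 0" for i
  proof
    show "1 \<le> i" using that valid_0[OF v] by (cases i) auto
    show "i \<le> ?M" using Max_ge[OF fin] that by simp
  qed
  then have "c \<in> gs 1 ?M" using v unfolding gs_def by blast
  then show ?thesis by blast
qed

lemma gs_mono_le: assumes "c \<in> gs a m" "m \<le> m'" shows "c \<in> gs a m'"
proof -
  have "a \<le> i \<and> i \<le> m'" if "c i \<noteq> 0" for i using gs_supp[OF assms(1) that] assms(2) by simp
  then show ?thesis using assms(1) unfolding gs_def by blast
qed

lemma uniq: assumes "cg_valid c" "cg_valid d" "cg_val c = cg_val d" shows "c = d"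
proof -
  obtain m1 where m1: "c \<in> gs 1 m1" using valid_in_gs[OF assms(1)] by blast
  obtain m2 where m2: "d \<in> gs 1 m2" using valid_in_gs[OF assms(2)] by blast
  have "c \<in> gs 1 (max m1 m2)" "d \<in> gs 1 (max m1 m2)" using gs_mono_le m1 m2 by auto
  then show ?thesis using inj_val[of "max m1 m2"] assms(3) by (meson inj_onD)
qed

lemma coeffs_eq: assumes "cg_valid c" shows "cg_coeffs (cg_val c) = c"
  unfolding cg_coeffs_def
proof (rule the_equality)
  show "cg_valid c \<and> cg_val c = cg_val c" using assms by simp
  fix d assume "cg_valid d \<and> cg_val d = cg_val c"
  then show "d = c" using uniq assms by blast
qed

lemma coeffs: "cg_valid (cg_coeffs n) \<and> cg_val (cg_coeffs n) = n"
proof -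
  obtain c where "cg_valid c" "cg_val c = n" using exists_rep by blast
  then show ?thesis using coeffs_eq by metis
qed

definition ff :: "nat \<Rightarrow> nat" where "ff i = fib (2*i)"

lemma ff_strict: "strict_mono ff"
  unfolding strict_mono_Suc_iff
proof
  fix n
  have "fib (2*n+1) > 0" by (rule fib_neq_0_nat) simp
  moreover have "fib (2 * Suc n) = fib (2*n+1) + fib (2*n)"
    using fib_plus_2[of "2*n"] by (simp add: algebra_simps)
  ultimately show "ff n < ff (Suc n)" unfolding ff_def by simp
qed

lemma ff_inj: "ff i = ff j \<longleftrightarrow> i = j"
  using strict_mono_eq[OF ff_strict] .

lemma Max_ff: "finite S \<Longrightarrow> S \<noteq> {} \<Longrightarrow> Max (ff ` S) = ff (Max S)"
  using mono_Max_commute[OF strict_mono_mono[OF ff_strict]] by metis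

lemma Min_ff: "finite S \<Longrightarrow> S \<noteq> {} \<Longrightarrow> Min (ff ` S) = ff (Min S)"
  using mono_Min_commute[OF strict_mono_mono[OF ff_strict]] by metis

lemma setchar:
  fixes I J :: "nat set"
  assumes fI: "finite I" and JI: "J \<subseteq> I"
  shows "(I \<noteq> {} \<and> Min (ff ` I) = ff k \<and> ff ` J \<noteq> {} \<and> Max (ff ` I) = Max (ff ` J) \<and> Max (ff ` J) = ff t)
     \<longleftrightarrow> (I \<subseteq> {k..t} \<and> k \<in> I \<and> t \<in> J)"
proof
  assume h: "I \<noteq> {} \<and> Min (ff ` I) = ff k \<and> ff ` J \<noteq> {} \<and> Max (ff ` I) = Max (ff ` J) \<and> Max (ff ` J) = ff t"
  have fJ: "finite J" using fI JI finite_subset by blast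
  have Ine: "I \<noteq> {}" and Jne: "J \<noteq> {}" using h by auto
  have mi: "Min I = k" using h Min_ff[OF fI Ine] ff_inj by simp
  have mj: "Max J = t" using h Max_ff[OF fJ Jne] ff_inj by simp
  have ma: "Max I = t" using h Max_ff[OF fI Ine] Max_ff[OF fJ Jne] ff_inj mj by simp
  have "I \<subseteq> {k..t}"
  proof
    fix i assume "i \<in> I"
    then have "Min I \<le> i" "i \<le> Max I" using fI by auto
    then show "i \<in> {k..t}" using mi ma by simp
  qed
  moreover have "k \<in> I" using Min_in[OF fI Ine] mi by simp
  moreover have "t \<in> J" using Max_in[OF fJ Jne] mj by simp
  ultimately show "I \<subseteq> {k..t} \<and> k \<in> I \<and> t \<in> J" by blast
next
  assume h: "I \<subseteq> {k..t} \<and> k \<in> I \<and> t \<in> J"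
  have fJ: "finite J" using fI JI finite_subset by blast
  have Ine: "I \<noteq> {}" and Jne: "J \<noteq> {}" using h by auto
  have mi: "Min I = k" by (rule Min_eqI[OF fI]) (use h in auto)
  have ma: "Max I = t" by (rule Max_eqI[OF fI]) (use h JI in auto)
  have mj: "Max J = t" by (rule Max_eqI[OF fJ]) (use h JI in auto)
  show "I \<noteq> {} \<and> Min (ff ` I) = ff k \<and> ff ` J \<noteq> {} \<and> Max (ff ` I) = Max (ff ` J) \<and> Max (ff ` J) = ff t"
    using Ine Jne mi ma mj Min_ff[OF fI Ine] Max_ff[OF fI Ine] Max_ff[OF fJ Jne] by simp
qed

lemma CG_eq: "CG n = ff ` {i. cg_coeffs n i \<noteq> 0}"
proof -
  have v: "cg_coeffs n 0 = 0" using valid_0 coeffs by blast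
  have "{i. 1 \<le> i \<and> cg_coeffs n i \<noteq> 0} = {i. cg_coeffs n i \<noteq> 0}"
    using v by (auto simp: Suc_le_eq) (metis gr0I)
  then show ?thesis unfolding CG_def ff_def by blast
qed

lemma CGd_eq:
  assumes "d \<noteq> 0"
  shows "{fib (2 * i) | i. i \<ge> 1 \<and> cg_coeffs n i = d} = ff ` {i. cg_coeffs n i = d}"
proof -
  have v: "cg_coeffs n 0 = 0" using valid_0 coeffs by blast
  have "{i. 1 \<le> i \<and> cg_coeffs n i = d} = {i. cg_coeffs n i = d}"
    using v assms by (auto simp: Suc_le_eq) (metis gr0I)
  then show ?thesis unfolding ff_def by blast
qed

lemma CG1_eq: "CG1 n = ff ` {i. cg_coeffs n i = 1}"
  unfolding CG1_def using CGd_eq[of 1 n] by simp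

lemma CG2_eq: "CG2 n = ff ` {i. cg_coeffs n i = 2}"
  unfolding CG2_def using CGd_eq[of 2 n] by simp

lemma val_pos: assumes "cg_valid c" "c k \<noteq> 0" "k \<ge> 1" shows "cg_val c \<ge> 1"
proof -
  have fin: "finite {i. c i \<noteq> 0}" using valid_fin[OF assms(1)] .
  have "c k * fib (2*k) \<le> cg_val c"
    unfolding cg_val_def by (rule member_le_sum) (use assms fin in auto)
  moreover have "fib (2*k) > 0" by (rule fib_neq_0_nat) (use assms in simp)
  ultimately show ?thesis using assms(2)
    by (metis One_nat_def Suc_leI less_le_trans mult_pos_pos not_gr_zero)
qed

lemma main_gen:
  assumes D: "d \<noteq> 0" and k: "k \<ge> 1"
  shows "{n. n \<ge> 1 \<and> Min (ff ` {i. cg_coeffs n i \<noteq> 0}) = fib (2*k) \<and>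
              ff ` {i. cg_coeffs n i = d} \<noteq> {} \<and>
              Max (ff ` {i. cg_coeffs n i \<noteq> 0}) = Max (ff ` {i. cg_coeffs n i = d}) \<and>
              Max (ff ` {i. cg_coeffs n i = d}) = fib (2*k + 2*l)}
         = cg_val ` {c \<in> gs k (k+l). c k \<noteq> 0 \<and> c (k+l) = d}" (is "?L = ?R")
proof -
  have fk: "fib (2*k) = ff k" and fl: "fib (2*k+2*l) = ff (k+l)" unfolding ff_def by (simp_all add: algebra_simps)
  have key: "(n \<ge> 1 \<and> Min (ff ` {i. c i \<noteq> 0}) = ff k \<and>
              ff ` {i. c i = d} \<noteq> {} \<and>
              Max (ff ` {i. c i \<noteq> 0}) = Max (ff ` {i. c i = d}) \<and>
              Max (ff ` {i. c i = d}) = ff (k+l)) \<longleftrightarrow> c \<in> gs k (k+l) \<and> c k \<noteq> 0 \<and> c (k+l) = d"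
    if v: "cg_valid c" and n: "cg_val c = n" for c n
  proof -
    have fI: "finite {i. c i \<noteq> 0}" using valid_fin[OF v] .
    have JI: "{i. c i = d} \<subseteq> {i. c i \<noteq> 0}" using D by auto
    note sc = setchar[OF fI JI, of k "k+l"]
    show ?thesis
    proof
      assume h: "n \<ge> 1 \<and> Min (ff ` {i. c i \<noteq> 0}) = ff k \<and> ff ` {i. c i = d} \<noteq> {} \<and>
              Max (ff ` {i. c i \<noteq> 0}) = Max (ff ` {i. c i = d}) \<and> Max (ff ` {i. c i = d}) = ff (k+l)"
      then have "{i. c i = d} \<noteq> {}" by blast
      then have "{i. c i \<noteq> 0} \<noteq> {}" using JI by blast
      then have r: "{i. c i \<noteq> 0} \<subseteq> {k..k+l} \<and> k \<in> {i. c i \<noteq> 0} \<and> k+l \<in> {i. c i = d}"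
        using sc h by blast
      have "c \<in> gs k (k+l)" unfolding gs_def using v r by auto
      then show "c \<in> gs k (k+l) \<and> c k \<noteq> 0 \<and> c (k+l) = d" using r by simp
    next
      assume h: "c \<in> gs k (k+l) \<and> c k \<noteq> 0 \<and> c (k+l) = d"
      have r: "{i. c i \<noteq> 0} \<subseteq> {k..k+l} \<and> k \<in> {i. c i \<noteq> 0} \<and> k+l \<in> {i. c i = d}"
        using h gs_supp[of c k "k+l"] by auto
      have "n \<ge> 1" using val_pos[OF v _ k] h n by blast
      then show "n \<ge> 1 \<and> Min (ff ` {i. c i \<noteq> 0}) = ff k \<and> ff ` {i. c i = d} \<noteq> {} \<and>
              Max (ff ` {i. c i \<noteq> 0}) = Max (ff ` {i. c i = d}) \<and> Max (ff ` {i. c i = d}) = ff (k+l)"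
        using sc r by blast
    qed
  qed
  show ?thesis
  proof (intro equalityI subsetI)
    fix n assume "n \<in> ?L"
    then have h: "n \<ge> 1 \<and> Min (ff ` {i. cg_coeffs n i \<noteq> 0}) = ff k \<and>
              ff ` {i. cg_coeffs n i = d} \<noteq> {} \<and>
              Max (ff ` {i. cg_coeffs n i \<noteq> 0}) = Max (ff ` {i. cg_coeffs n i = d}) \<and>
              Max (ff ` {i. cg_coeffs n i = d}) = ff (k+l)" using fk fl by simp
    have "cg_coeffs n \<in> gs k (k+l) \<and> cg_coeffs n k \<noteq> 0 \<and> cg_coeffs n (k+l) = d"
      using key[of "cg_coeffs n" n] coeffs[of n] h by blast
    moreover have "n = cg_val (cg_coeffs n)" using coeffs[of n] by simp
    ultimately show "n \<in> ?R" by blast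
  next
    fix n assume "n \<in> ?R"
    then obtain c where c: "c \<in> gs k (k+l)" "c k \<noteq> 0" "c (k+l) = d" and n: "n = cg_val c" by blast
    have v: "cg_valid c" using c unfolding gs_def by blast
    have cc: "cg_coeffs n = c" using coeffs_eq[OF v] n by simp
    have "n \<ge> 1 \<and> Min (ff ` {i. c i \<noteq> 0}) = ff k \<and>
              ff ` {i. c i = d} \<noteq> {} \<and>
              Max (ff ` {i. c i \<noteq> 0}) = Max (ff ` {i. c i = d}) \<and>
              Max (ff ` {i. c i = d}) = ff (k+l)" using key[OF v n[symmetric]] c by blast
    then show "n \<in> ?L" using cc fk fl by simp
  qed
qed

lemma card_val: "S \<subseteq> {c. cg_valid c} \<Longrightarrow> card (cg_val ` S) = card S"
proof (rule card_image, rule inj_onI)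
  fix x y assume "S \<subseteq> {c. cg_valid c}" "x \<in> S" "y \<in> S" "cg_val x = cg_val y"
  then show "x = y" using uniq[of x y] by blast
qed

lemma gs_shift: "c \<in> gs k m \<Longrightarrow> c k = 0 \<Longrightarrow> c \<in> gs (Suc k) m"
proof -
  assume c: "c \<in> gs k m" and z: "c k = 0"
  have "Suc k \<le> i \<and> i \<le> m" if "c i \<noteq> 0" for i
  proof -
    have "k \<le> i" "i \<le> m" using gs_supp[OF c that] by auto
    moreover have "i \<noteq> k" using that z by auto
    ultimately show ?thesis by simp
  qed
  then show ?thesis using c unfolding gs_def by blast
qed

lemma gs_anti: "gs (Suc k) m \<subseteq> gs k m"
proof
  fix c assume c: "c \<in> gs (Suc k) m"
  have "k \<le> i \<and> i \<le> m" if "c i \<noteq> 0" for i using gs_supp[OF c that] by simp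
  then show "c \<in> gs k m" using c unfolding gs_def by blast
qed

lemma rs_anti: "rs (Suc k) m \<subseteq> rs k m"
  unfolding rs_def using gs_anti by blast

lemma T_eq:
  assumes "k \<le> m" and d: "d = 1 \<or> d = 2"
  shows "{c \<in> gs k (Suc m). c k \<noteq> 0 \<and> c (Suc m) = d}
        = (\<lambda>c. c(Suc m := d)) ` ((if d = 1 then gs k m else rs k m) - (if d = 1 then gs (Suc k) m else rs (Suc k) m))"
    (is "?T = _ ` (?X - ?Y)")
proof (intro equalityI subsetI)
  fix c assume "c \<in> ?T"
  then have c: "c \<in> gs k (Suc m)" "c k \<noteq> 0" "c (Suc m) = d" by auto
  have kS: "k \<noteq> Suc m" using assms by simp
  have x: "c(Suc m := 0) \<in> ?X" using d del_gs[OF c(1)] del_rs2[OF c(1)] c(3) by auto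
  have "(c(Suc m := 0)) k \<noteq> 0" using c kS by simp
  then have "c(Suc m := 0) \<notin> ?Y" using gs_supp[of "c(Suc m := 0)" "Suc k" m k] rs_sub by auto
  moreover have "c = (c(Suc m := 0))(Suc m := d)" using c(3) fun_upd_idem[of c "Suc m" d] by simp
  ultimately show "c \<in> (\<lambda>c. c(Suc m := d)) ` (?X - ?Y)" using x by blast
next
  fix c assume "c \<in> (\<lambda>c. c(Suc m := d)) ` (?X - ?Y)"
  then obtain c' where c': "c' \<in> ?X" "c' \<notin> ?Y" and cc: "c = c'(Suc m := d)" by blast
  have km: "k \<le> Suc m" "k \<noteq> Suc m" using assms by auto
  have g: "c' \<in> gs k m" using c'(1) rs_sub by (auto split: if_splits)
  have nz: "c' k \<noteq> 0"
  proof
    assume z: "c' k = 0"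
    then have "c' \<in> gs (Suc k) m" using gs_shift[OF g] by simp
    moreover have "c' \<in> rs (Suc k) m" if "d = 2"
      using c'(1) that \<open>c' \<in> gs (Suc k) m\<close> unfolding rs_def by auto
    ultimately show False using c'(2) d by auto
  qed
  have "c \<in> gs k (Suc m)" unfolding cc
    by (rule upd_gs[OF g km(1)]) (use d c'(1) in \<open>auto split: if_splits\<close>)
  moreover have "c k \<noteq> 0" "c (Suc m) = d" using cc nz km by auto
  ultimately show "c \<in> ?T" by blast
qed

theorem corollary3p4:
  fixes k l :: nat
  assumes "k \<ge> 1" and "l \<ge> 1"
  shows "card {n \<in> A k. CG1 n \<noteq> {} \<and> Max (CG n) = Max (CG1 n) \<and>
                        Max (CG1 n) = fib (2 * k + 2 * l)} = fib (2 * l + 1)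
       \<and> card {n \<in> A k. CG2 n \<noteq> {} \<and> Max (CG n) = Max (CG2 n) \<and>
                        Max (CG2 n) = fib (2 * k + 2 * l)} = fib (2 * l)"
proof -
  obtain b where kb: "k = Suc b" using assms(1) by (cases k) auto
  obtain l' where ll: "l = Suc l'" using assms(2) by (cases l) auto
  define m where "m = k + l'"
  have klm: "k + l = Suc m" using ll m_def by simp
  have km: "k \<le> m" by (simp add: m_def)
  have m1: "b + Suc l' = m" and m2: "Suc b + l' = m" using kb m_def by simp_all
  have S1: "{n \<in> A k. CG1 n \<noteq> {} \<and> Max (CG n) = Max (CG1 n) \<and> Max (CG1 n) = fib (2 * k + 2 * l)}
      = cg_val ` {c \<in> gs k (k+l). c k \<noteq> 0 \<and> c (k+l) = 1}"
    using main_gen[of 1 k l] assms(1) unfolding A_def CG_eq CG1_eq by simp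
  have S2: "{n \<in> A k. CG2 n \<noteq> {} \<and> Max (CG n) = Max (CG2 n) \<and> Max (CG2 n) = fib (2 * k + 2 * l)}
      = cg_val ` {c \<in> gs k (k+l). c k \<noteq> 0 \<and> c (k+l) = 2}"
    using main_gen[of 2 k l] assms(1) unfolding A_def CG_eq CG2_eq by simp
  have T1: "{c \<in> gs k (k+l). c k \<noteq> 0 \<and> c (k+l) = 1} = (\<lambda>c. c(Suc m := 1)) ` (gs k m - gs (Suc k) m)"
    using T_eq[OF km, of 1] klm by simp
  have T2: "{c \<in> gs k (k+l). c k \<noteq> 0 \<and> c (k+l) = 2} = (\<lambda>c. c(Suc m := 2)) ` (rs k m - rs (Suc k) m)"
    using T_eq[OF km, of 2] klm by simp
  have V1: "{c \<in> gs k (k+l). c k \<noteq> 0 \<and> c (k+l) = 1} \<subseteq> {c. cg_valid c}" unfolding gs_def by blast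
  have V2: "{c \<in> gs k (k+l). c k \<noteq> 0 \<and> c (k+l) = 2} \<subseteq> {c. cg_valid c}" unfolding gs_def by blast
  have cA: "finite (gs k m)" "card (gs k m) = fib (2 * Suc l' + 2)"
     "finite (rs k m)" "card (rs k m) = fib (2 * Suc l' + 1)"
    using count[of b "Suc l'"] kb m1 by simp_all
  have cB: "finite (gs (Suc k) m)" "card (gs (Suc k) m) = fib (2 * l' + 2)"
     "finite (rs (Suc k) m)" "card (rs (Suc k) m) = fib (2 * l' + 1)"
    using count[of "Suc b" l'] kb m2 by simp_all
  have "card ((\<lambda>c. c(Suc m := 1)) ` (gs k m - gs (Suc k) m)) = card (gs k m - gs (Suc k) m)"
    by (rule card_image) (rule inj_on_subset[OF inj_upd], blast)
  also have "\<dots> = card (gs k m) - card (gs (Suc k) m)"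
    by (rule card_Diff_subset[OF cB(1) gs_anti])
  also have "\<dots> = fib (2 * l + 1)" using cA(2) cB(2) fibA[of l'] fibB[of l'] ll by simp
  finally have C1: "card ((\<lambda>c. c(Suc m := 1)) ` (gs k m - gs (Suc k) m)) = fib (2 * l + 1)" .
  have "card ((\<lambda>c. c(Suc m := 2)) ` (rs k m - rs (Suc k) m)) = card (rs k m - rs (Suc k) m)"
    by (rule card_image) (rule inj_on_subset[OF inj_upd], use rs_sub in blast)
  also have "\<dots> = card (rs k m) - card (rs (Suc k) m)"
    by (rule card_Diff_subset[OF cB(3) rs_anti])
  also have "\<dots> = fib (2 * l)" using cA(4) cB(4) fibB[of l'] fibC[of l'] ll by simp
  finally have C2: "card ((\<lambda>c. c(Suc m := 2)) ` (rs k m - rs (Suc k) m)) = fib (2 * l)" .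
  show ?thesis
    using S1 S2 card_val[OF V1] card_val[OF V2] T1 T2 C1 C2 by simp
qed

end
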